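(* Let $K$ be a field, $A$ a $K$-algebra and $X$ a set such that, for some $P\subseteq K[X^*]$, the natural morphism $\theta:K[X^*]\to A$ induces an isomorphism $K[X^*]/\langle P\rangle\to A$ (where $\langle P\rangle$ is the two-sided ideal generated by $P$). Let $Q\subseteq K[X^*]$ and $Q':=\theta(Q)$. Define the mixed set $F:=(\dashv\! Q,P)$ with tagged part $\dashv\! Q=\{\dashv\! q: q\in Q\}$ and untagged part $P$. Then there is a bijection of sets $$\frac{K[\dashv\! X^*]}{\stackrel{*}{\leftrightarrow}_F}\;\cong\;\frac{A}{\langle Q'\rangle^r},$$ where $\langle Q'\rangle^r$ is the right ideal of $A$ generated by $Q'$ and $A/\langle Q'\rangle^r$ is the set of classes under $a\sim b\iff a-b\in\langle Q'\rangle^r$.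
   Context: $X^*$ is the free monoid on $X$ (including the empty word $id$) and $K[X^*]$ the free noncommutative $K$-algebra with identity on $X$. A monoid well-ordering $>$ on $X^*$ is fixed (a well-ordering such that $m_1>m_2\Rightarrow um_1v>um_2v$ for $u,v\in X^*$); for a nonzero polynomial, $\mathtt{LT}$ is its largest term and $\mathtt{LC}$ its coefficient. Tagged polynomials: $\dashv$ is a symbol; $K[\dashv\! X^*]$ is the $K$-vector space with basis the tagged terms $\dashv\! m$ ($m\in X^*$), a right $K[X^*]$-module via $(\dashv\! m)w=\dashv\!(mw)$. For $p=\sum k_im_i\in K[X^*]$ and $w\in X^*$, $\dashv\! w\,p:=\sum k_i\dashv\!(wm_i)$ and $\dashv\! p:=\dashv\! id\,p$; tagged terms are ordered by $\dashv\! m_1>\dashv\! m_2\iff m_1>m_2$. Reduction: for a mixed set $F=(F_T,F_P)$, $F_T\subseteq K[\dashv\! X^*]$, $F_P\subseteq K[X^*]$ (zero elements ignored), $\to_F$ on $K[\dashv\! X^*]$ is: $f\to_F f-\frac{k}{\mathtt{LC}(f_i)}f_iv$ if $f_i\in F_T$, $v\in X^*$ and $\mathtt{LT}(f_i)v$ occurs in $f$ with coefficient $k\neq0$; and $f\to_F f-\frac{k}{\mathtt{LC}(f_i)}\dashv\! w\,f_i\,v$ if $f_i\in F_P$, $w,v\in X^*$ and $\dashv\!(w\,\mathtt{LT}(f_i)\,v)$ occurs in $f$ with coefficient $k\ne0$. (The paper normalizes all polynomials to be monic.) $\stackrel{*}{\leftrightarrow}_F$ is the reflexive, symmetric, transitive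 closure of $\to_F$. *)

theory Defs
  imports Main "HOL-Library.Poly_Mapping"
begin

text \<open>Words of the free monoid X* are lists; the empty word id is [].
  K[X*] is represented by finitely supported maps 'x list =>0 'k.\<close>

type_synonym ('x, 'k) ncpoly = "'x list \<Rightarrow>\<^sub>0 'k"

text \<open>Tagged terms (the symbol \<dashv> applied to a word) and tagged polynomials.\<close>
datatype 'x tterm = Tag "'x list"

type_synonym ('x, 'k) tpoly = "'x tterm \<Rightarrow>\<^sub>0 'k"

fun untag :: "'x tterm \<Rightarrow> 'x list" where "untag (Tag m) = m"

definition ncmul :: "('x, 'k::comm_semiring_1) ncpoly \<Rightarrow> ('x, 'k) ncpoly \<Rightarrow> ('x, 'k) ncpoly" where
  "ncmul p q = (\<Sum>u\<in>Poly_Mapping.keys p. \<Sum>v\<in>Poly_Mapping.keys q. Poly_Mapping.single (u @ v) (Poly_Mapping.lookup p u * Poly_Mapping.lookup q v))"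

definition psmult :: "'k::semiring_0 \<Rightarrow> ('t \<Rightarrow>\<^sub>0 'k) \<Rightarrow> ('t \<Rightarrow>\<^sub>0 'k)" where
  "psmult c f = Poly_Mapping.map (\<lambda>a. c * a) f"

definition tag_left :: "'x list \<Rightarrow> ('x, 'k::comm_monoid_add) ncpoly \<Rightarrow> ('x, 'k) tpoly" where
  "tag_left w p = (\<Sum>m\<in>Poly_Mapping.keys p. Poly_Mapping.single (Tag (w @ m)) (Poly_Mapping.lookup p m))"

definition tag :: "('x, 'k::comm_monoid_add) ncpoly \<Rightarrow> ('x, 'k) tpoly" where
  "tag p = tag_left [] p"

definition tright :: "('x, 'k::comm_monoid_add) tpoly \<Rightarrow> 'x list \<Rightarrow> ('x, 'k) tpoly" where
  "tright f v = (\<Sum>t\<in>Poly_Mapping.keys f. Poly_Mapping.single (Tag (untag t @ v)) (Poly_Mapping.lookup f t))"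

definition monoid_wellorder :: "('x list \<Rightarrow> 'x list \<Rightarrow> bool) \<Rightarrow> bool" where
  "monoid_wellorder lt \<longleftrightarrow>
     (\<forall>a. \<not> lt a a) \<and> (\<forall>a b c. lt a b \<longrightarrow> lt b c \<longrightarrow> lt a c) \<and>
     (\<forall>a b. a \<noteq> b \<longrightarrow> lt a b \<or> lt b a) \<and> wfP lt \<and>
     (\<forall>m1 m2 u v. lt m2 m1 \<longrightarrow> lt (u @ m2 @ v) (u @ m1 @ v))"

text \<open>Leading term and leading coefficient (for nonzero polynomials).\<close>
definition LT :: "('x list \<Rightarrow> 'x list \<Rightarrow> bool) \<Rightarrow> ('x, 'k::zero) ncpoly \<Rightarrow> 'x list" where
  "LT lt p = (THE m. m \<in> Poly_Mapping.keys p \<and> (\<forall>m'\<in>Poly_Mapping.keys p. m' \<noteq> m \<longrightarrow> lt m' m))"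

definition LC :: "('x list \<Rightarrow> 'x list \<Rightarrow> bool) \<Rightarrow> ('x, 'k::zero) ncpoly \<Rightarrow> 'k" where
  "LC lt p = Poly_Mapping.lookup p (LT lt p)"

definition tLT :: "('x list \<Rightarrow> 'x list \<Rightarrow> bool) \<Rightarrow> ('x, 'k::zero) tpoly \<Rightarrow> 'x tterm" where
  "tLT lt f = (THE t. t \<in> Poly_Mapping.keys f \<and> (\<forall>t'\<in>Poly_Mapping.keys f. t' \<noteq> t \<longrightarrow> lt (untag t') (untag t)))"

definition tLC :: "('x list \<Rightarrow> 'x list \<Rightarrow> bool) \<Rightarrow> ('x, 'k::zero) tpoly \<Rightarrow> 'k" where
  "tLC lt f = Poly_Mapping.lookup f (tLT lt f)"

text \<open>One reduction step \<rightarrow>_F for the mixed set F = (FT, FP).\<close>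
definition red :: "('x list \<Rightarrow> 'x list \<Rightarrow> bool) \<Rightarrow> ('x, 'k::field) tpoly set \<Rightarrow> ('x, 'k) ncpoly set
                   \<Rightarrow> ('x, 'k) tpoly \<Rightarrow> ('x, 'k) tpoly \<Rightarrow> bool" where
  "red lt FT FP f g \<longleftrightarrow>
     (\<exists>fi\<in>FT. fi \<noteq> 0 \<and> (\<exists>v. Poly_Mapping.lookup f (Tag (untag (tLT lt fi) @ v)) \<noteq> 0 \<and>
        g = f - psmult (Poly_Mapping.lookup f (Tag (untag (tLT lt fi) @ v)) / tLC lt fi) (tright fi v))) \<or>
     (\<exists>fi\<in>FP. fi \<noteq> 0 \<and> (\<exists>w v. Poly_Mapping.lookup f (Tag (w @ LT lt fi @ v)) \<noteq> 0 \<and>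
        g = f - psmult (Poly_Mapping.lookup f (Tag (w @ LT lt fi @ v)) / LC lt fi) (tag_left w (ncmul fi (Poly_Mapping.single v 1)))))"

inductive_set ideal2 :: "('x, 'k::comm_ring_1) ncpoly set \<Rightarrow> ('x, 'k) ncpoly set" for P where
  zero: "0 \<in> ideal2 P"
| gen: "p \<in> P \<Longrightarrow> p \<in> ideal2 P"
| add: "a \<in> ideal2 P \<Longrightarrow> b \<in> ideal2 P \<Longrightarrow> a + b \<in> ideal2 P"
| lmul: "a \<in> ideal2 P \<Longrightarrow> ncmul u a \<in> ideal2 P"
| rmul: "a \<in> ideal2 P \<Longrightarrow> ncmul a u \<in> ideal2 P"

inductive_set rideal :: "'a::ring_1 set \<Rightarrow> 'a set" for Q where
  zero: "0 \<in> rideal Q"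
| gen: "q \<in> Q \<Longrightarrow> q \<in> rideal Q"
| add: "a \<in> rideal Q \<Longrightarrow> b \<in> rideal Q \<Longrightarrow> a + b \<in> rideal Q"
| rmul: "a \<in> rideal Q \<Longrightarrow> a * r \<in> rideal Q"

text \<open>A K-algebra structure on a ring A: a ring homomorphism K \<rightarrow> A landing in the centre.\<close>
definition k_algebra :: "('k::field \<Rightarrow> 'a::ring_1) \<Rightarrow> bool" where
  "k_algebra \<iota> \<longleftrightarrow> (\<forall>a b. \<iota> (a + b) = \<iota> a + \<iota> b) \<and> (\<forall>a b. \<iota> (a * b) = \<iota> a * \<iota> b) \<and>
     \<iota> 1 = 1 \<and> (\<forall>c x. \<iota> c * x = x * \<iota> c)"

text \<open>The natural morphism \<theta> : K[X*] \<rightarrow> A determined by the images g of the letters.\<close>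
definition theta :: "('k::field \<Rightarrow> 'a::ring_1) \<Rightarrow> ('x \<Rightarrow> 'a) \<Rightarrow> ('x, 'k) ncpoly \<Rightarrow> 'a" where
  "theta \<iota> g p = (\<Sum>m\<in>Poly_Mapping.keys p. \<iota> (Poly_Mapping.lookup p m) * prod_list (map g m))"

end

theory Submission
  imports Defs
begin


instantiation list :: (type) monoid_add
begin
definition zero_list :: "'a list" where "zero_list = []"
definition plus_list :: "'a list \<Rightarrow> 'a list \<Rightarrow> 'a list" where "plus_list = (@)"
instance by standard (auto simp: zero_list_def plus_list_def)
end

definition rk :: "('a \<Rightarrow> 'b) \<Rightarrow> ('a \<Rightarrow>\<^sub>0 'c::comm_monoid_add) \<Rightarrow> ('b \<Rightarrow>\<^sub>0 'c)" where
  "rk h p = (\<Sum>k\<in>Poly_Mapping.keys p. Poly_Mapping.single (h k) (Poly_Mapping.lookup p k))"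

lemma rk_add: "rk h (p + q) = rk h p + rk h q"
  unfolding rk_def by (rule setsum_keys_plus_distrib) (auto simp: single_add)

lemma rk_zero[simp]: "rk h 0 = 0" by (simp add: rk_def)

lemma rk_single[simp]: "rk h (Poly_Mapping.single k c) = Poly_Mapping.single (h k) c"
  by (simp add: rk_def)

lemma pm_expand: "p = (\<Sum>k\<in>Poly_Mapping.keys p. Poly_Mapping.single k (Poly_Mapping.lookup p k))"
proof (rule poly_mapping_eqI)
  fix x
  show "Poly_Mapping.lookup p x = Poly_Mapping.lookup (\<Sum>k\<in>Poly_Mapping.keys p. Poly_Mapping.single k (Poly_Mapping.lookup p k)) x"
    by (simp add: lookup_sum lookup_single when_def in_keys_iff)
qed

lemma pm_induct[case_names zero step]:
  fixes p :: "'a \<Rightarrow>\<^sub>0 'b::comm_monoid_add"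
  assumes "Q 0" and "\<And>p k c. Q p \<Longrightarrow> Q (Poly_Mapping.single k c + p)"
  shows "Q p"
proof -
  have "\<And>S. finite S \<Longrightarrow> Q (\<Sum>k\<in>S. Poly_Mapping.single k (Poly_Mapping.lookup p k))"
  proof -
    fix S :: "'a set" assume "finite S"
    then show "Q (\<Sum>k\<in>S. Poly_Mapping.single k (Poly_Mapping.lookup p k))"
      by (induction S rule: finite_induct) (auto intro: assms)
  qed
  then show ?thesis using pm_expand[of p] by (metis finite_keys)
qed

lemma rk_minus: "rk h (p - q) = rk h p - rk h (q :: _ \<Rightarrow>\<^sub>0 'c::ab_group_add)"
  by (metis add_diff_cancel rk_add diff_add_cancel eq_diff_eq)

lemma rk_rk: "rk h1 (rk h2 p) = rk (\<lambda>k. h1 (h2 k)) p"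
  by (induction p rule: pm_induct) (simp_all add: rk_add)

lemma rk_id: "rk (\<lambda>k. k) p = p"
  by (induction p rule: pm_induct) (simp_all add: rk_add)

lemma lookup_rk_inj: "inj h \<Longrightarrow> Poly_Mapping.lookup (rk h p) (h k) = Poly_Mapping.lookup p k"
  by (induction p rule: pm_induct) (simp_all add: rk_add lookup_add lookup_single when_def inj_eq)

lemma ncmul_eq: "ncmul p q = p * q"
proof -
  have "p * q = (\<Sum>u\<in>Poly_Mapping.keys p. Poly_Mapping.single u (Poly_Mapping.lookup p u)) *
     (\<Sum>v\<in>Poly_Mapping.keys q. Poly_Mapping.single v (Poly_Mapping.lookup q v))"
    using pm_expand[of p] pm_expand[of q] by simp
  also have "\<dots> = ncmul p q"
    by (simp add: ncmul_def sum_distrib_left sum_distrib_right mult_single plus_list_def) (rule sum.swap)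
  finally show ?thesis by simp
qed

lemma mult_single_right: "(p::(_,'k::comm_semiring_1) ncpoly) * Poly_Mapping.single v 1 = rk (\<lambda>u. u @ v) p"
  by (induction p rule: pm_induct) (simp_all add: rk_add distrib_right mult_single plus_list_def)

lemma mult_single_left: "Poly_Mapping.single w 1 * (p::(_,'k::comm_semiring_1) ncpoly) = rk (\<lambda>u. w @ u) p"
  by (induction p rule: pm_induct) (simp_all add: rk_add distrib_left mult_single plus_list_def)

lemma scalar_comm: "Poly_Mapping.single [] (b::'k::comm_semiring_1) * x = x * Poly_Mapping.single [] b"
  by (induction x rule: pm_induct) (simp_all add: distrib_left distrib_right mult_single plus_list_def mult.commute)

lemma tag_rk: "tag p = rk Tag p" by (simp add: tag_def tag_left_def rk_def)
lemma tag_left_rk: "tag_left w p = rk (\<lambda>m. Tag (w @ m)) p" by (simp add: tag_left_def rk_def)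
lemma tright_rk: "tright f v = rk (\<lambda>t. Tag (untag t @ v)) f" by (simp add: tright_def rk_def)

definition untg :: "('x, 'k::comm_monoid_add) tpoly \<Rightarrow> ('x, 'k) ncpoly" where "untg f = rk untag f"

lemma untg_tag[simp]: "untg (tag p) = p"
  by (simp add: untg_def tag_rk rk_rk rk_id)

lemma Tag_untag[simp]: "Tag (untag t) = t" by (cases t) simp

lemma tag_untg[simp]: "tag (untg f) = f"
  by (simp add: untg_def tag_rk rk_rk rk_id)

lemma tag_add: "tag (p + q) = tag p + tag q" by (simp add: tag_rk rk_add)
lemma tag_minus: "tag (p - q) = tag p - tag (q::('x,'k::ab_group_add) ncpoly)" by (simp add: tag_rk rk_minus)
lemma tag_zero[simp]: "tag 0 = 0" by (simp add: tag_rk)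

lemma tright_tag: "tright (tag (q::(_,'k::comm_semiring_1) ncpoly)) v = tag (q * Poly_Mapping.single v 1)"
  by (simp add: tright_rk tag_rk rk_rk mult_single_right)

lemma tag_left_tag: "tag_left w (p::(_,'k::comm_semiring_1) ncpoly) = tag (Poly_Mapping.single w 1 * p)"
  by (simp add: tag_left_rk tag_rk rk_rk mult_single_left)

lemma lookup_map': "c * 0 = 0 \<Longrightarrow> Poly_Mapping.lookup (Poly_Mapping.map ((*) c) p) k = c * Poly_Mapping.lookup p k"
  by (simp add: Poly_Mapping.map.rep_eq when_def)

lemma psmult_tag: "psmult c (tag p) = tag (Poly_Mapping.single [] (c::'k::field) * p)"
proof -
  have "psmult c (tag p) = rk Tag (psmult c p)"
    by (rule poly_mapping_eqI) (simp add: psmult_def lookup_map' tag_rk, case_tac k, simp add: lookup_rk_inj inj_def lookup_map')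
  then show ?thesis by (simp add: tag_rk psmult_def mult_map_scale_conv_mult zero_list_def)
qed



lemma k_alg_simps:
  assumes "k_algebra \<iota>"
  shows "\<iota> 0 = 0" "\<iota> (a + b) = \<iota> a + \<iota> b" "\<iota> (a * b) = \<iota> a * \<iota> b"
proof -
  have "\<iota> (0 + 0) = \<iota> 0 + \<iota> 0" using assms unfolding k_algebra_def by blast
  then show "\<iota> 0 = 0" by simp
  show "\<iota> (a + b) = \<iota> a + \<iota> b" "\<iota> (a * b) = \<iota> a * \<iota> b" using assms unfolding k_algebra_def by blast+
qed

lemma iota_comm: "k_algebra \<iota> \<Longrightarrow> \<iota> c * x = x * \<iota> c"
  unfolding k_algebra_def by blast

lemma theta_add: "k_algebra \<iota> \<Longrightarrow> theta \<iota> g (p + q) = theta \<iota> g p + theta \<iota> g q"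
  unfolding theta_def by (rule setsum_keys_plus_distrib) (simp_all add: k_alg_simps distrib_right)

lemma theta_zero[simp]: "theta \<iota> g 0 = 0" by (simp add: theta_def)

lemma theta_single: "k_algebra \<iota> \<Longrightarrow> theta \<iota> g (Poly_Mapping.single m c) = \<iota> c * prod_list (map g m)"
  by (simp add: theta_def k_alg_simps)

lemma theta_diff: "k_algebra \<iota> \<Longrightarrow> theta \<iota> g (p - q) = theta \<iota> g p - theta \<iota> g q"
  by (metis theta_add diff_add_cancel eq_diff_eq)

lemma theta_mult:
  assumes ka: "k_algebra \<iota>"
  shows "theta \<iota> g (p * q) = theta \<iota> g p * theta \<iota> g q"
proof (induction p rule: pm_induct)
  case zero then show ?case by simp
next
  case (step p u a)
  have "theta \<iota> g (Poly_Mapping.single u a * q) = theta \<iota> g (Poly_Mapping.single u a) * theta \<iota> g q"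
  proof (induction q rule: pm_induct)
    case zero then show ?case by simp
  next
    case (step q v b)
    have "Poly_Mapping.single u a * Poly_Mapping.single v b = Poly_Mapping.single (u @ v) (a * b)"
      by (simp add: mult_single plus_list_def)
    then have "theta \<iota> g (Poly_Mapping.single u a * Poly_Mapping.single v b) =
          \<iota> a * \<iota> b * (prod_list (map g u) * prod_list (map g v))"
      by (simp add: theta_single[OF ka] k_alg_simps[OF ka] mult.assoc)
    also have "\<dots> = (\<iota> a * prod_list (map g u)) * (\<iota> b * prod_list (map g v))"
      by (simp only: mult.assoc iota_comm[OF ka, of b "prod_list (map g u) * prod_list (map g v)"])
         (simp only: iota_comm[OF ka, of b "prod_list (map g v)"] mult.assoc[symmetric])
    also have "\<dots> = theta \<iota> g (Poly_Mapping.single u a) * theta \<iota> g (Poly_Mapping.single v b)"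
      by (simp add: theta_single[OF ka])
    finally have 1: "theta \<iota> g (Poly_Mapping.single u a * Poly_Mapping.single v b) = theta \<iota> g (Poly_Mapping.single u a) * theta \<iota> g (Poly_Mapping.single v b)" .
    have "theta \<iota> g (Poly_Mapping.single u a * (Poly_Mapping.single v b + q)) =
       theta \<iota> g (Poly_Mapping.single u a * Poly_Mapping.single v b) + theta \<iota> g (Poly_Mapping.single u a * q)"
      by (simp only: distrib_left theta_add[OF ka])
    also have "\<dots> = theta \<iota> g (Poly_Mapping.single u a) * (theta \<iota> g (Poly_Mapping.single v b) + theta \<iota> g q)"
      by (simp only: 1 step distrib_left)
    finally show ?case by (simp only: theta_add[OF ka])
  qed
  then show ?case using step by (simp only: distrib_right theta_add[OF ka])
qed

lemma max_ex:
  assumes "finite S" "S \<noteq> {}" "inj_on h S" "\<forall>a b c. lt a b \<longrightarrow> lt b c \<longrightarrow> lt a c"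
    "\<forall>a b. a \<noteq> b \<longrightarrow> lt a b \<or> lt b a"
  shows "\<exists>m\<in>S. \<forall>m'\<in>S. m' \<noteq> m \<longrightarrow> lt (h m') (h m)"
  using assms
proof (induction S rule: finite_ne_induct)
  case (singleton x) then show ?case by simp
next
  case (insert x F)
  then obtain m where m: "m \<in> F" "\<forall>m'\<in>F. m' \<noteq> m \<longrightarrow> lt (h m') (h m)" by auto
  have hne: "h x \<noteq> h m" using insert.prems(1) insert.hyps m(1) by (auto simp: inj_on_def)
  show ?case
  proof (cases "lt (h m) (h x)")
    case True
    have "\<forall>m'\<in>insert x F. m' \<noteq> x \<longrightarrow> lt (h m') (h x)"
    proof (intro ballI impI)
      fix m' assume "m' \<in> insert x F" "m' \<noteq> x"
      then have "m' \<in> F" by simp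
      show "lt (h m') (h x)"
      proof (cases "m' = m")
        case True then show ?thesis using \<open>lt (h m) (h x)\<close> by simp
      next
        case False then have "lt (h m') (h m)" using m \<open>m' \<in> F\<close> by blast
        then show ?thesis using \<open>lt (h m) (h x)\<close> insert.prems(2) by blast
      qed
    qed
    then show ?thesis by blast
  next
    case False
    then have "lt (h x) (h m)" using hne insert.prems(3) by blast
    then show ?thesis using m by (intro bexI[of _ m]) auto
  qed
qed

lemma the_max:
  assumes "finite S" "S \<noteq> {}" "inj_on h S" "monoid_wellorder lt"
  shows "(THE m. m \<in> S \<and> (\<forall>m'\<in>S. m' \<noteq> m \<longrightarrow> lt (h m') (h m))) \<in> S"
proof -
  have o: "\<forall>a. \<not> lt a a" "\<forall>a b c. lt a b \<longrightarrow> lt b c \<longrightarrow> lt a c" "\<forall>a b. a \<noteq> b \<longrightarrow> lt a b \<or> lt b a"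
    using assms(4) unfolding monoid_wellorder_def by auto
  obtain m where m: "m \<in> S" "\<forall>m'\<in>S. m' \<noteq> m \<longrightarrow> lt (h m') (h m)"
    using max_ex[OF assms(1-3) o(2,3)] by blast
  have "\<exists>!m. m \<in> S \<and> (\<forall>m'\<in>S. m' \<noteq> m \<longrightarrow> lt (h m') (h m))"
  proof (rule ex1I[of _ m])
    show "m \<in> S \<and> (\<forall>m'\<in>S. m' \<noteq> m \<longrightarrow> lt (h m') (h m))" using m by blast
  next
    fix y assume y: "y \<in> S \<and> (\<forall>m'\<in>S. m' \<noteq> y \<longrightarrow> lt (h m') (h y))"
    show "y = m"
    proof (rule ccontr)
      assume "y \<noteq> m"
      then have "lt (h y) (h m)" "lt (h m) (h y)" using y m by auto
      then show False using o(1,2) by blast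
    qed
  qed
  from theI'[OF this] show ?thesis by blast
qed

lemma inj_untag: "inj untag" by (metis Tag_untag injI)

lemma tLT_in: "monoid_wellorder lt \<Longrightarrow> f \<noteq> 0 \<Longrightarrow> tLT lt f \<in> Poly_Mapping.keys f"
  unfolding tLT_def
  by (rule the_max) (auto intro: inj_on_subset[OF inj_untag])

lemma LT_in: "monoid_wellorder lt \<Longrightarrow> p \<noteq> 0 \<Longrightarrow> LT lt p \<in> Poly_Mapping.keys p"
  unfolding LT_def using the_max[of "Poly_Mapping.keys p" "\<lambda>x. x" lt] by simp

lemma lookup_psmult: "Poly_Mapping.lookup (psmult c e) k = c * Poly_Mapping.lookup e k"
  by (simp add: psmult_def lookup_map')

lemma core:
  fixes e :: "('x, 'k::field) tpoly"
  assumes ne: "Poly_Mapping.lookup e t \<noteq> 0"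
    and st: "\<And>f. Poly_Mapping.lookup f t \<noteq> 0 \<Longrightarrow> r f (f - psmult (Poly_Mapping.lookup f t / Poly_Mapping.lookup e t) e)"
  shows "equivclp r f (f + psmult c e)"
proof -
  let ?l = "Poly_Mapping.lookup e t"
  let ?f' = "f + psmult c e"
  have ft': "Poly_Mapping.lookup ?f' t = Poly_Mapping.lookup f t + c * ?l"
    by (simp add: lookup_add lookup_psmult)
  show ?thesis
  proof (cases "c = 0")
    case True
    have "psmult c e = 0" by (rule poly_mapping_eqI) (simp add: lookup_psmult True)
    then show ?thesis by simp
  next
    case cne: False
    show ?thesis
    proof (cases "Poly_Mapping.lookup f t = 0")
      case True
      have "r ?f' (?f' - psmult (Poly_Mapping.lookup ?f' t / ?l) e)"
        using st[of ?f'] ft' True cne ne by simp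
      moreover have "?f' - psmult (Poly_Mapping.lookup ?f' t / ?l) e = f"
        using True ne by (simp add: ft')
      ultimately have "r ?f' f" by simp
      then show ?thesis by (metis equivclp_sym r_into_equivclp)
    next
      case fne: False
      have s1: "r f (f - psmult (Poly_Mapping.lookup f t / ?l) e)" using st fne by blast
      show ?thesis
      proof (cases "Poly_Mapping.lookup ?f' t = 0")
        case True
        have fteq: "Poly_Mapping.lookup f t = - (c * ?l)" using True ft' by (simp add: eq_neg_iff_add_eq_0)
        have "f - psmult (Poly_Mapping.lookup f t / ?l) e = ?f'"
          by (rule poly_mapping_eqI) (use ne in \<open>simp add: fteq lookup_add lookup_minus lookup_psmult\<close>)
        then show ?thesis using s1 by (metis r_into_equivclp)
      next
        case False
        have s2: "r ?f' (?f' - psmult (Poly_Mapping.lookup ?f' t / ?l) e)" using st False by blast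
        have "?f' - psmult (Poly_Mapping.lookup ?f' t / ?l) e = f - psmult (Poly_Mapping.lookup f t / ?l) e"
          by (rule poly_mapping_eqI) (use ne in \<open>simp add: ft' lookup_add lookup_minus lookup_psmult field_simps\<close>)
        then have "equivclp r f ?f'" using s1 s2
          by (metis equivclp_sym r_into_equivclp equivclp_trans)
        then show ?thesis .
      qed
    qed
  qed
qed



lemma psmult_zero[simp]: "psmult c (0::('x,'k::field) tpoly) = 0"
  by (rule poly_mapping_eqI) (simp add: lookup_psmult)

lemma inj_tright: "inj (\<lambda>t. Tag (untag t @ v))"
  by (rule injI) (metis Tag_untag append_same_eq tterm.inject)

lemma core1:
  assumes wo: "monoid_wellorder lt" and q: "q \<in> Q"
  shows "equivclp (red lt (tag ` Q) P) f (f + psmult c (tright (tag q) v))"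
proof (cases "tag q = 0")
  case True
  then show ?thesis by (simp add: tright_rk)
next
  case False
  let ?fi = "tag q"
  let ?t = "Tag (untag (tLT lt ?fi) @ v)"
  have l: "Poly_Mapping.lookup (tright ?fi v) ?t = tLC lt ?fi"
    unfolding tright_rk tLC_def using lookup_rk_inj[OF inj_tright, of v ?fi "tLT lt ?fi"] by simp
  have ne: "tLC lt ?fi \<noteq> 0" unfolding tLC_def using tLT_in[OF wo False] by (simp add: in_keys_iff)
  show ?thesis
  proof (rule core[where t = ?t])
    show "Poly_Mapping.lookup (tright ?fi v) ?t \<noteq> 0" using l ne by simp
  next
    fix f :: "('a, 'b) tpoly"
    assume "Poly_Mapping.lookup f ?t \<noteq> 0"
    then show "red lt (tag ` Q) P f (f - psmult (Poly_Mapping.lookup f ?t / Poly_Mapping.lookup (tright ?fi v) ?t) (tright ?fi v))"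
      unfolding red_def l using q False by blast
  qed
qed

lemma inj_tl: "inj (\<lambda>m. Tag (w @ m @ v))"
  by (rule injI) simp

lemma core2:
  assumes wo: "monoid_wellorder lt" and p: "p \<in> P"
  shows "equivclp (red lt (tag ` Q) P) f (f + psmult c (tag_left w (ncmul p (Poly_Mapping.single v 1))))"
proof (cases "p = 0")
  case True
  then show ?thesis by (simp add: tag_left_rk ncmul_eq)
next
  case False
  let ?e = "tag_left w (ncmul p (Poly_Mapping.single v 1))"
  let ?t = "Tag (w @ LT lt p @ v)"
  have e: "?e = rk (\<lambda>m. Tag (w @ m @ v)) p"
    by (simp add: tag_left_rk ncmul_eq mult_single_right rk_rk)
  have l: "Poly_Mapping.lookup ?e ?t = LC lt p"
    unfolding e LC_def using lookup_rk_inj[OF inj_tl, of w v p "LT lt p"] by simp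
  have ne: "LC lt p \<noteq> 0" unfolding LC_def using LT_in[OF wo False] by (simp add: in_keys_iff)
  show ?thesis
  proof (rule core[where t = ?t])
    show "Poly_Mapping.lookup ?e ?t \<noteq> 0" using l ne by simp
  next
    fix f :: "('a, 'b) tpoly"
    assume "Poly_Mapping.lookup f ?t \<noteq> 0"
    then show "red lt (tag ` Q) P f (f - psmult (Poly_Mapping.lookup f ?t / Poly_Mapping.lookup ?e ?t) ?e)"
      unfolding red_def l using p False by blast
  qed
qed

definition inN :: "('a \<Rightarrow> 'a \<Rightarrow> bool) \<Rightarrow> 'a::ab_group_add \<Rightarrow> bool" where "inN r d \<longleftrightarrow> (\<forall>f. equivclp r f (f + d))"

lemma inN_zero: "inN r 0" by (simp add: inN_def)

lemma inN_add: "inN r a \<Longrightarrow> inN r b \<Longrightarrow> inN r (a + b)"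
  unfolding inN_def
proof (intro allI)
  fix f assume a: "\<forall>f. equivclp r f (f + a)" and b: "\<forall>f. equivclp r f (f + b)"
  have "equivclp r f (f + a)" "equivclp r (f + a) (f + a + b)" using a b by blast+
  then have "equivclp r f (f + a + b)" by (rule equivclp_trans)
  then show "equivclp r f (f + (a + b))" by (simp add: add.assoc)
qed

lemma inN_neg: "inN r (a::'a::ab_group_add) \<Longrightarrow> inN r (- a)"
  unfolding inN_def
proof (intro allI)
  fix f assume a: "\<forall>f. equivclp r f (f + a)"
  have "equivclp r (f + - a) (f + - a + a)" using a by blast
  then have "equivclp r (f + - a) f" by simp
  then show "equivclp r f (f + - a)" by (rule equivclp_sym)
qed

lemma inN_sum:
  fixes F :: "('x, 'k::comm_ring_1) ncpoly \<Rightarrow> ('x, 'k) ncpoly"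
  shows "(\<And>k c. inN r (tag (F (Poly_Mapping.single k c)))) \<Longrightarrow>
   (\<And>x y. F (x + y) = F x + F y) \<Longrightarrow> inN r (tag (F p))"
proof (induction p rule: pm_induct)
  case zero
  have "F 0 = 0" using zero(2)[of 0 0] by simp
  then show ?case by (simp add: inN_zero)
next
  case (step p k c)
  then show ?case by (simp add: tag_add inN_add)
qed

lemma lemA:
  assumes wo: "monoid_wellorder lt" and a: "a \<in> ideal2 P"
  shows "inN (red lt (tag ` Q) P) (tag (u * a * s))"
  using a
proof (induction arbitrary: u s)
  case zero then show ?case by (simp add: inN_zero)
next
  case (gen p)
  show ?case
  proof (rule inN_sum[where F = "\<lambda>u. u * p * s"])
    fix w a
    show "inN (red lt (tag ` Q) P) (tag (Poly_Mapping.single w a * p * s))"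
    proof (rule inN_sum[where F = "\<lambda>s. Poly_Mapping.single w a * p * s"])
      fix v b
      let ?X = "Poly_Mapping.single w 1 * (p * Poly_Mapping.single v 1)"
      have sw: "Poly_Mapping.single w a = Poly_Mapping.single [] a * Poly_Mapping.single w (1::'b)"
        by (simp add: mult_single plus_list_def)
      have sv: "Poly_Mapping.single v b = Poly_Mapping.single v (1::'b) * Poly_Mapping.single [] b"
        by (simp add: mult_single plus_list_def)
      have "Poly_Mapping.single w a * p * Poly_Mapping.single v b =
            Poly_Mapping.single [] a * (?X * Poly_Mapping.single [] b)"
        by (subst sw, subst sv) (simp only: mult.assoc)
      also have "\<dots> = Poly_Mapping.single [] (a * b) * ?X"
        by (simp add: scalar_comm[symmetric] mult.assoc[symmetric] mult_single plus_list_def)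
      finally have "tag (Poly_Mapping.single w a * p * Poly_Mapping.single v b) =
          psmult (a * b) (tag_left w (ncmul p (Poly_Mapping.single v 1)))"
        by (simp add: psmult_tag tag_left_tag ncmul_eq)
      then show "inN (red lt (tag ` Q) P) (tag (Poly_Mapping.single w a * p * Poly_Mapping.single v b))"
        unfolding inN_def using core2[OF wo gen] by simp
    qed (simp add: distrib_left)
  qed (simp add: distrib_right)
next
  case (add a b)
  then show ?case by (simp add: distrib_left distrib_right tag_add inN_add)
next
  case (lmul a u')
  then show ?case using lmul.IH[of "u * u'" s] by (simp add: ncmul_eq mult.assoc)
next
  case (rmul a u')
  then show ?case using rmul.IH[of u "u' * s"] by (simp add: ncmul_eq mult.assoc)
qed

lemma lemB:
  assumes wo: "monoid_wellorder lt" and ka: "k_algebra \<iota>" and su: "surj (theta \<iota> g)"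
    and x: "x \<in> rideal (theta \<iota> g ` Q)"
  shows "\<exists>p. theta \<iota> g p = x \<and> (\<forall>s. inN (red lt (tag ` Q) P) (tag (p * s)))"
  using x
proof (induction)
  case zero
  show ?case by (intro exI[of _ 0]) (simp add: inN_zero)
next
  case (gen x)
  then obtain q where q: "q \<in> Q" "x = theta \<iota> g q" by blast
  have "inN (red lt (tag ` Q) P) (tag (q * s))" for s
  proof (rule inN_sum[where F = "\<lambda>s. q * s"])
    fix v b
    have "q * Poly_Mapping.single v b = q * (Poly_Mapping.single v 1 * Poly_Mapping.single [] b)"
      by (simp add: mult_single plus_list_def)
    also have "\<dots> = Poly_Mapping.single [] b * (q * Poly_Mapping.single v 1)"
      by (simp add: scalar_comm mult.assoc)
    finally have "tag (q * Poly_Mapping.single v b) = psmult b (tright (tag q) v)"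
      by (simp add: psmult_tag tright_tag)
    then show "inN (red lt (tag ` Q) P) (tag (q * Poly_Mapping.single v b))"
      unfolding inN_def using core1[OF wo q(1)] by simp
  qed (simp add: distrib_left)
  then show ?case using q by blast
next
  case (add a b)
  then obtain p1 p2 where "theta \<iota> g p1 = a" "\<forall>s. inN (red lt (tag ` Q) P) (tag (p1 * s))"
     "theta \<iota> g p2 = b" "\<forall>s. inN (red lt (tag ` Q) P) (tag (p2 * s))" by blast
  then show ?case
    by (intro exI[of _ "p1 + p2"]) (simp add: theta_add[OF ka] distrib_right tag_add inN_add)
next
  case (rmul a r)
  then obtain p1 where p1: "theta \<iota> g p1 = a" "\<forall>s. inN (red lt (tag ` Q) P) (tag (p1 * s))" by blast
  obtain s0 where s0: "r = theta \<iota> g s0" using su by (metis surj_def)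
  show ?case
    by (intro exI[of _ "p1 * s0"]) (simp add: theta_mult[OF ka] p1 s0 mult.assoc)
qed



lemma R_neg: "a \<in> rideal S \<Longrightarrow> - a \<in> rideal S"
  using rideal.rmul[of a S "-1"] by simp

lemma R_diff: "a \<in> rideal S \<Longrightarrow> b \<in> rideal S \<Longrightarrow> a - b \<in> rideal S"
  using rideal.add[of a S "- b"] R_neg[of b S] by simp

lemma dir1:
  assumes ka: "k_algebra \<iota>" and ker: "\<forall>p. theta \<iota> g p = 0 \<longleftrightarrow> p \<in> ideal2 P"
    and r: "red lt (tag ` Q) P f h"
  shows "theta \<iota> g (untg f) - theta \<iota> g (untg h) \<in> rideal (theta \<iota> g ` Q)"
proof -
  let ?a = "untg f"
  have fa: "f = tag ?a" by simp
  from r show ?thesis unfolding red_def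
  proof (elim disjE bexE exE conjE)
    fix fi v assume fi: "fi \<in> tag ` Q" and h: "h = f - psmult (Poly_Mapping.lookup f (Tag (untag (tLT lt fi) @ v)) / tLC lt fi) (tright fi v)"
    obtain q where q: "q \<in> Q" "fi = tag q" using fi by blast
    define c where "c = Poly_Mapping.lookup f (Tag (untag (tLT lt fi) @ v)) / tLC lt fi"
    let ?X = "Poly_Mapping.single [] c * (q * Poly_Mapping.single v 1)"
    have "h = tag (?a - ?X)" unfolding h c_def[symmetric]
      by (subst fa) (simp add: q(2) tright_tag psmult_tag tag_minus)
    then have "untg h = ?a - ?X" by simp
    then have "theta \<iota> g (untg f) - theta \<iota> g (untg h) = theta \<iota> g ?X"
      by (simp add: theta_diff[OF ka])
    also have "\<dots> = \<iota> c * (theta \<iota> g q * theta \<iota> g (Poly_Mapping.single v 1))"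
      by (simp add: theta_mult[OF ka] theta_single[OF ka])
    also have "\<dots> = theta \<iota> g q * (theta \<iota> g (Poly_Mapping.single v 1) * \<iota> c)"
      by (simp add: iota_comm[OF ka] mult.assoc)
    also have "\<dots> \<in> rideal (theta \<iota> g ` Q)"
      by (rule rideal.rmul, rule rideal.gen) (use q in blast)
    finally show ?thesis .
  next
    fix fi w v assume fi: "fi \<in> P" and h: "h = f - psmult (Poly_Mapping.lookup f (Tag (w @ LT lt fi @ v)) / LC lt fi) (tag_left w (ncmul fi (Poly_Mapping.single v 1)))"
    define c where "c = Poly_Mapping.lookup f (Tag (w @ LT lt fi @ v)) / LC lt fi"
    let ?X = "Poly_Mapping.single [] c * (Poly_Mapping.single w 1 * (fi * Poly_Mapping.single v 1))"
    have "h = tag (?a - ?X)" unfolding h c_def[symmetric]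
      by (subst fa) (simp add: tag_left_tag psmult_tag tag_minus ncmul_eq)
    then have "untg h = ?a - ?X" by simp
    then have "theta \<iota> g (untg f) - theta \<iota> g (untg h) = theta \<iota> g ?X"
      by (simp add: theta_diff[OF ka])
    also have "?X \<in> ideal2 P"
      using ideal2.lmul[OF ideal2.lmul[OF ideal2.rmul[OF ideal2.gen[OF fi]]]] by (simp add: ncmul_eq)
    then have "theta \<iota> g ?X = 0" using ker by blast
    finally show ?thesis by (simp add: rideal.zero)
  qed
qed

lemma dir1_eq:
  assumes ka: "k_algebra \<iota>" and ker: "\<forall>p. theta \<iota> g p = 0 \<longleftrightarrow> p \<in> ideal2 P"
    and e: "equivclp (red lt (tag ` Q) P) f h"
  shows "theta \<iota> g (untg f) - theta \<iota> g (untg h) \<in> rideal (theta \<iota> g ` Q)"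
  using e unfolding equivclp_def
proof (induction rule: rtranclp_induct)
  case base then show ?case by (simp add: rideal.zero)
next
  case (step y z)
  have "theta \<iota> g (untg y) - theta \<iota> g (untg z) \<in> rideal (theta \<iota> g ` Q)"
  proof -
    have "red lt (tag ` Q) P y z \<or> red lt (tag ` Q) P z y" using step(2) by (auto simp: symclp_def)
    then show ?thesis
    proof
      assume "red lt (tag ` Q) P y z" then show ?thesis by (rule dir1[OF ka ker])
    next
      assume "red lt (tag ` Q) P z y"
      from R_neg[OF dir1[OF ka ker this]] show ?thesis by simp
    qed
  qed
  from rideal.add[OF step(3) this] show ?case by simp
qed

lemma dir2:
  assumes wo: "monoid_wellorder lt" and ka: "k_algebra \<iota>" and su: "surj (theta \<iota> g)"
    and ker: "\<forall>p. theta \<iota> g p = 0 \<longleftrightarrow> p \<in> ideal2 P"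
    and x: "theta \<iota> g (untg f) - theta \<iota> g (untg h) \<in> rideal (theta \<iota> g ` Q)"
  shows "equivclp (red lt (tag ` Q) P) f h"
proof -
  let ?r = "red lt (tag ` Q) P"
  obtain p where p: "theta \<iota> g p = theta \<iota> g (untg f) - theta \<iota> g (untg h)" "\<forall>s. inN ?r (tag (p * s))"
    using lemB[OF wo ka su x, of P] by blast
  have np: "inN ?r (tag p)" using p(2)[rule_format, of 1] by simp
  define d where "d = untg f - untg h - p"
  have "theta \<iota> g d = 0" unfolding d_def by (simp add: theta_diff[OF ka] p(1))
  then have "d \<in> ideal2 P" using ker by blast
  from lemA[OF wo this, of Q 1 1] have nd: "inN ?r (tag d)" by simp
  have "tag d + tag p = f - h" unfolding d_def by (simp add: tag_minus)
  with inN_add[OF nd np] have "inN ?r (f - h)" by simp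
  from inN_neg[OF this] have "inN ?r (h - f)" by simp
  from \<open>inN ?r (h - f)\<close> have "equivclp ?r f (f + (h - f))" unfolding inN_def by blast
  then show ?thesis by simp
qed

lemma quot_bij:
  fixes \<Phi> :: "'a \<Rightarrow> 'b"
  assumes su: "surj \<Phi>" and eq: "\<And>f h. r1 f h \<longleftrightarrow> (\<Phi> f, \<Phi> h) \<in> r2" and ev: "equiv UNIV r2"
  shows "\<exists>\<phi>. bij_betw \<phi> (UNIV // {(f, h). r1 f h}) (UNIV // r2)"
proof -
  let ?r1 = "{(f, h). r1 f h}"
  define \<phi> where "\<phi> X = r2 `` (\<Phi> ` X)" for X
  have rf: "(a, a) \<in> r2" for a using ev by (auto simp: equiv_def refl_on_def)
  have sy: "(a, b) \<in> r2 \<Longrightarrow> (b, a) \<in> r2" for a b using ev by (auto simp: equiv_def sym_def)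
  have tr: "(a, b) \<in> r2 \<Longrightarrow> (b, c) \<in> r2 \<Longrightarrow> (a, c) \<in> r2" for a b c using ev
    unfolding equiv_def trans_def by blast
  have key: "\<phi> (?r1 `` {f}) = r2 `` {\<Phi> f}" for f
  proof
    show "\<phi> (?r1 `` {f}) \<subseteq> r2 `` {\<Phi> f}"
    proof
      fix x assume "x \<in> \<phi> (?r1 `` {f})"
      then obtain h where "r1 f h" "(\<Phi> h, x) \<in> r2" unfolding \<phi>_def by blast
      then have "(\<Phi> f, \<Phi> h) \<in> r2" "(\<Phi> h, x) \<in> r2" using eq by blast+
      then show "x \<in> r2 `` {\<Phi> f}" using tr by blast
    qed
    show "r2 `` {\<Phi> f} \<subseteq> \<phi> (?r1 `` {f})"
    proof
      fix x assume "x \<in> r2 `` {\<Phi> f}"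
      then have x: "(\<Phi> f, x) \<in> r2" by blast
      have "r1 f f" using eq rf by blast
      then have "f \<in> ?r1 `` {f}" by blast
      then show "x \<in> \<phi> (?r1 `` {f})" unfolding \<phi>_def using x by blast
    qed
  qed
  have "inj_on \<phi> (UNIV // ?r1)"
  proof (rule inj_onI)
    fix X Y assume X: "X \<in> UNIV // ?r1" and Y: "Y \<in> UNIV // ?r1" and e: "\<phi> X = \<phi> Y"
    obtain f where f: "X = ?r1 `` {f}" using X by (auto elim: quotientE)
    obtain h where h: "Y = ?r1 `` {h}" using Y by (auto elim: quotientE)
    have "r2 `` {\<Phi> f} = r2 `` {\<Phi> h}" using e key f h by simp
    then have fh: "(\<Phi> f, \<Phi> h) \<in> r2" using ev by (simp add: equiv_class_eq_iff)
    have "?r1 `` {f} = ?r1 `` {h}"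
    proof (intro set_eqI iffI)
      fix x assume "x \<in> ?r1 `` {f}"
      then have "(\<Phi> f, \<Phi> x) \<in> r2" using eq by blast
      then have "(\<Phi> h, \<Phi> x) \<in> r2" using tr[OF sy[OF fh]] by blast
      then show "x \<in> ?r1 `` {h}" using eq by blast
    next
      fix x assume "x \<in> ?r1 `` {h}"
      then have "(\<Phi> h, \<Phi> x) \<in> r2" using eq by blast
      then have "(\<Phi> f, \<Phi> x) \<in> r2" using tr[OF fh] by blast
      then show "x \<in> ?r1 `` {f}" using eq by blast
    qed
    then show "X = Y" using f h by simp
  qed
  moreover have "\<phi> ` (UNIV // ?r1) = UNIV // r2"
  proof
    show "\<phi> ` (UNIV // ?r1) \<subseteq> UNIV // r2"
    proof
      fix Z assume "Z \<in> \<phi> ` (UNIV // ?r1)"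
      then obtain X where X: "X \<in> UNIV // ?r1" "Z = \<phi> X" by blast
      obtain f where "X = ?r1 `` {f}" using X(1) by (auto elim: quotientE)
      then have "Z = r2 `` {\<Phi> f}" using X(2) key by simp
      then show "Z \<in> UNIV // r2" by (auto intro: quotientI)
    qed
    show "UNIV // r2 \<subseteq> \<phi> ` (UNIV // ?r1)"
    proof
      fix Z assume "Z \<in> UNIV // r2"
      then obtain a where a: "Z = r2 `` {a}" by (auto elim: quotientE)
      obtain f where "a = \<Phi> f" using su by (metis surjD)
      then have "Z = \<phi> (?r1 `` {f})" using a key by simp
      moreover have "?r1 `` {f} \<in> UNIV // ?r1" by (rule quotientI) simp
      ultimately show "Z \<in> \<phi> ` (UNIV // ?r1)" by blast
    qed
  qed
  ultimately show ?thesis unfolding bij_betw_def by blast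
qed

theorem theorem3p6:
  fixes lt :: "'x list \<Rightarrow> 'x list \<Rightarrow> bool"
    and \<iota> :: "'k::field \<Rightarrow> 'a::ring_1"
    and g :: "'x \<Rightarrow> 'a"
    and P Q :: "('x, 'k) ncpoly set"
  assumes "monoid_wellorder lt"
    and "k_algebra \<iota>"
    and "surj (theta \<iota> g)"
    and "\<forall>p. theta \<iota> g p = 0 \<longleftrightarrow> p \<in> ideal2 P"
  shows "\<exists>\<phi>. bij_betw \<phi>
           (UNIV // {(f, h). equivclp (red lt (tag ` Q) P) f h})
           (UNIV // {(a, b). a - b \<in> rideal (theta \<iota> g ` Q)})"
proof (rule quot_bij[where \<Phi> = "\<lambda>f. theta \<iota> g (untg f)"])
  show "surj (\<lambda>f. theta \<iota> g (untg f))"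
    unfolding surj_def
  proof
    fix a
    obtain p where "a = theta \<iota> g p" using assms(3) by (metis surjD)
    then show "\<exists>x. a = theta \<iota> g (untg x)" by (intro exI[of _ "tag p"]) simp
  qed
  fix f h
  show "equivclp (red lt (tag ` Q) P) f h \<longleftrightarrow>
     (theta \<iota> g (untg f), theta \<iota> g (untg h)) \<in> {(a, b). a - b \<in> rideal (theta \<iota> g ` Q)}"
    using dir1_eq[OF assms(2,4)] dir2[OF assms] by blast
next
  show "equiv UNIV {(a, b). a - b \<in> rideal (theta \<iota> g ` Q)}"
  proof (rule equivI)
    show "refl {(a, b). a - b \<in> rideal (theta \<iota> g ` Q)}"
      unfolding refl_on_def by (simp add: rideal.zero)
    show "{(a, b). a - b \<in> rideal (theta \<iota> g ` Q)} \<subseteq> UNIV \<times> UNIV" by blast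
    show "sym {(a, b). a - b \<in> rideal (theta \<iota> g ` Q)}"
      by (rule symI) (use R_neg in fastforce)
    show "trans {(a, b). a - b \<in> rideal (theta \<iota> g ` Q)}"
    proof (rule transI)
      fix x y z assume "(x, y) \<in> {(a, b). a - b \<in> rideal (theta \<iota> g ` Q)}" "(y, z) \<in> {(a, b). a - b \<in> rideal (theta \<iota> g ` Q)}"
      then have "x - y \<in> rideal (theta \<iota> g ` Q)" "y - z \<in> rideal (theta \<iota> g ` Q)" by auto
      from rideal.add[OF this] have "(x - y) + (y - z) \<in> rideal (theta \<iota> g ` Q)" .
      then show "(x, z) \<in> {(a, b). a - b \<in> rideal (theta \<iota> g ` Q)}" by simp
    qed
  qed
qed

end
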